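(* The generating function of $\alpha$-unimodal sets satisfies $$F(q,t,z):=\sum_{n\ge1}\sum_{\alpha\vDash n}\sum_{S\in U_\alpha} q^{|S|}\,t^{\ell(\alpha)}\,z^n = \frac{tz}{1-(1+q)(1+t)z+qz^2}$$ as formal power series.
   Context: A composition $\alpha=(\alpha_1,\dots,\alpha_\ell)$ of $n$ (written $\alpha\vDash n$) is a sequence of positive integers summing to $n$; $\ell(\alpha)=\ell$ is its number of parts. Set $S_\alpha=\{\alpha_1,\alpha_1+\alpha_2,\dots,\alpha_1+\dots+\alpha_{\ell-1}\}\subseteq[n-1]$. The blocks of $\alpha$ are $B_i(\alpha)=\{\alpha_1+\dots+\alpha_{i-1}+1,\dots,\alpha_1+\dots+\alpha_i\}$. A set $S\subseteq[n-1]$ is $\alpha$-unimodal if for every $i$ the set $S\cap(B_i(\alpha)\setminus S_\alpha)$ is an initial segment (in increasing order) of $B_i(\alpha)\setminus S_\alpha$. $U_\alpha$ denotes the set of $\alpha$-unimodal subsets of $[n-1]$. *)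

theory Defs
  imports "HOL-Computational_Algebra.Formal_Power_Series"
begin

definition compositions :: "nat \<Rightarrow> nat list set" where
  "compositions n = {\<alpha>. (\<forall>a\<in>set \<alpha>. 0 < a) \<and> sum_list \<alpha> = n}"

definition partial_sums_set :: "nat list \<Rightarrow> nat set" where
  "partial_sums_set \<alpha> = {sum_list (take i \<alpha>) | i. 1 \<le> i \<and> i \<le> length \<alpha> - 1}"

text \<open>Block i (0-indexed, i < length alpha) =
  {alpha_1+...+alpha_(i-1)+1, ..., alpha_1+...+alpha_i} in 1-indexed notation.\<close>
definition block :: "nat list \<Rightarrow> nat \<Rightarrow> nat set" where
  "block \<alpha> i = {sum_list (take i \<alpha>) + 1 .. sum_list (take (Suc i) \<alpha>)}"

definition is_init_seg :: "nat set \<Rightarrow> nat set \<Rightarrow> bool" where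
  "is_init_seg T U \<longleftrightarrow> T \<subseteq> U \<and> (\<forall>x\<in>U. \<forall>y\<in>T. x < y \<longrightarrow> x \<in> T)"

definition alpha_unimodal :: "nat list \<Rightarrow> nat set \<Rightarrow> bool" where
  "alpha_unimodal \<alpha> S \<longleftrightarrow>
     S \<subseteq> {1..<sum_list \<alpha>} \<and>
     (\<forall>i < length \<alpha>. is_init_seg (S \<inter> (block \<alpha> i - partial_sums_set \<alpha>))
                                          (block \<alpha> i - partial_sums_set \<alpha>))"

definition unimodal_sets :: "nat list \<Rightarrow> nat set set" where
  "unimodal_sets \<alpha> = {S. alpha_unimodal \<alpha> S}"

definition F_series :: "'a::comm_ring_1 \<Rightarrow> 'a \<Rightarrow> 'a fps" where
  "F_series q t = Abs_fps (\<lambda>n. if n = 0 then 0 else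
      (\<Sum>\<alpha>\<in>compositions n. \<Sum>S\<in>unimodal_sets \<alpha>. q ^ card S * t ^ length \<alpha>))"

end

theory Submission
  imports Defs
begin

unbundle fps_syntax


lemma init_interval:
  "is_init_seg T {l..<r} \<longleftrightarrow> (\<exists>k\<le>r-l. T = {l..<l+k})"
proof
  assume h: "is_init_seg T {l..<r}"
  hence sub: "T \<subseteq> {l..<r}" and cl: "\<forall>x\<in>{l..<r}. \<forall>y\<in>T. x < y \<longrightarrow> x \<in> T"
    by (auto simp: is_init_seg_def)
  show "\<exists>k\<le>r-l. T = {l..<l+k}"
  proof (cases "T = {}")
    case True thus ?thesis by (intro exI[of _ 0]) auto
  next
    case False
    have fin: "finite T" using sub finite_subset by blast
    define M where "M = Max T"
    have MT: "M \<in> T" using Max_in[OF fin False] M_def by simp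
    have Mge: "\<forall>y\<in>T. y \<le> M" using Max_ge[OF fin] M_def by simp
    have "T = {l..<l+(M+1-l)}"
    proof
      show "T \<subseteq> {l..<l+(M+1-l)}" using sub Mge by fastforce
      show "{l..<l+(M+1-l)} \<subseteq> T"
      proof
        fix x assume x: "x \<in> {l..<l+(M+1-l)}"
        show "x \<in> T"
        proof (cases "x = M")
          case True thus ?thesis using MT by simp
        next
          case False
          hence "x < M" using x MT sub by auto
          moreover have "x \<in> {l..<r}" using x MT sub by auto
          ultimately show ?thesis using cl MT by blast
        qed
      qed
    qed
    moreover have "M+1-l \<le> r - l" using subsetD[OF sub MT] by auto
    ultimately show ?thesis by blast
  qed
next
  assume "\<exists>k\<le>r-l. T = {l..<l+k}"
  then obtain k where "k \<le> r-l" "T = {l..<l+k}" by blast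
  thus "is_init_seg T {l..<r}" by (auto simp: is_init_seg_def)
qed

lemma seg_lemma:
  assumes "S \<subseteq> {1..<m+a}" "a \<ge> 1"
  shows "is_init_seg (S \<inter> {m+1..m+a}) {m+1..m+a} \<longleftrightarrow> (\<exists>k<a. S \<inter> {m+1..m+a} = {m+1..<m+1+k})"
proof -
  have e: "{m+1..m+a} = {m+1..<m+a+1}" by auto
  have "is_init_seg (S \<inter> {m+1..m+a}) {m+1..m+a} \<longleftrightarrow> (\<exists>k\<le>a. S \<inter> {m+1..m+a} = {m+1..<m+1+k})"
    unfolding e init_interval by simp
  also have "\<dots> \<longleftrightarrow> (\<exists>k<a. S \<inter> {m+1..m+a} = {m+1..<m+1+k})"
  proof
    assume "\<exists>k\<le>a. S \<inter> {m+1..m+a} = {m+1..<m+1+k}"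
    then obtain k where k: "k \<le> a" "S \<inter> {m+1..m+a} = {m+1..<m+1+k}" by blast
    have "k \<noteq> a"
    proof
      assume "k = a"
      hence "m + a \<in> S" using k assms(2) by (metis Int_iff atLeastLessThan_iff add_le_cancel_left le_add_same_cancel1 add.assoc add.commute less_add_one order.refl) 
      thus False using assms(1) by auto
    qed
    hence "k < a" using k by simp
    thus "\<exists>k<a. S \<inter> {m+1..m+a} = {m+1..<m+1+k}" using k by blast
  qed (meson less_imp_le)
  finally show ?thesis .
qed



lemma sum_take_le: "sum_list (take i (xs::nat list)) \<le> sum_list xs"
  by (metis append_take_drop_id le_add1 sum_list_append)

lemma psums_snoc:
  assumes "\<beta> \<noteq> []"
  shows "partial_sums_set (\<beta> @ [a]) = insert (sum_list \<beta>) (partial_sums_set \<beta>)"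
proof -
  have "partial_sums_set (\<beta> @ [a]) = {sum_list (take i \<beta>) | i. 1 \<le> i \<and> i \<le> length \<beta>}"
  proof -
    have t: "i \<le> length \<beta> \<Longrightarrow> take i (\<beta>@[a]) = take i \<beta>" for i by simp
    show ?thesis unfolding partial_sums_set_def by (simp only: length_append_singleton diff_Suc_1) (metis t)
  qed
  also have "\<dots> = insert (sum_list \<beta>) (partial_sums_set \<beta>)"
  proof
    show "{sum_list (take i \<beta>) | i. 1 \<le> i \<and> i \<le> length \<beta>} \<subseteq> insert (sum_list \<beta>) (partial_sums_set \<beta>)"
    proof
      fix x assume "x \<in> {sum_list (take i \<beta>) | i. 1 \<le> i \<and> i \<le> length \<beta>}"
      then obtain i where i: "x = sum_list (take i \<beta>)" "1 \<le> i" "i \<le> length \<beta>" by blast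
      show "x \<in> insert (sum_list \<beta>) (partial_sums_set \<beta>)"
      proof (cases "i = length \<beta>")
        case True thus ?thesis using i by simp
      next
        case False thus ?thesis using i unfolding partial_sums_set_def by auto
      qed
    qed
    show "insert (sum_list \<beta>) (partial_sums_set \<beta>) \<subseteq> {sum_list (take i \<beta>) | i. 1 \<le> i \<and> i \<le> length \<beta>}"
    proof -
      have "sum_list \<beta> \<in> {sum_list (take i \<beta>) | i. 1 \<le> i \<and> i \<le> length \<beta>}"
        using assms by (intro CollectI exI[of _ "length \<beta>"]) (simp add: Suc_le_eq)
      moreover have "partial_sums_set \<beta> \<subseteq> {sum_list (take i \<beta>) | i. 1 \<le> i \<and> i \<le> length \<beta>}"
        unfolding partial_sums_set_def by auto
      ultimately show ?thesis by blast
    qed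
  qed
  finally show ?thesis .
qed

lemma block_snoc: "i < length \<beta> \<Longrightarrow> block (\<beta> @ [a]) i = block \<beta> i"
  by (simp add: block_def)

lemma block_snoc_last: "block (\<beta> @ [a]) (length \<beta>) = {sum_list \<beta> + 1 .. sum_list \<beta> + a}"
  by (simp add: block_def)

lemma psums_le: "x \<in> partial_sums_set \<beta> \<Longrightarrow> x \<le> sum_list \<beta>"
  unfolding partial_sums_set_def using sum_take_le by auto

lemma block_sub: "block \<beta> i \<subseteq> {1..sum_list \<beta>}"
  unfolding block_def using sum_take_le[of "Suc i" \<beta>] by auto

lemma init_drop_max:
  assumes "m \<notin> T" "\<forall>u\<in>U. u \<le> m"
  shows "is_init_seg T U \<longleftrightarrow> is_init_seg T (U - {m})"
  unfolding is_init_seg_def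
proof safe
  fix x y assume "\<forall>x\<in>U - {m}. \<forall>y\<in>T. x < y \<longrightarrow> x \<in> T" "T \<subseteq> U - {m}" "x \<in> U" "y \<in> T" "x < y"
  moreover have "x \<noteq> m" using assms \<open>T \<subseteq> U - {m}\<close> \<open>y \<in> T\<close> \<open>x < y\<close> by force
  ultimately show "x \<in> T" by blast
qed (use assms in auto)

lemma unimodal_snoc:
  assumes "\<beta> \<noteq> []"
  defines "m \<equiv> sum_list \<beta>"
  shows "alpha_unimodal (\<beta> @ [a]) S \<longleftrightarrow>
     S \<subseteq> {1..<m+a} \<and> alpha_unimodal \<beta> (S \<inter> {1..<m}) \<and>
     is_init_seg (S \<inter> {m+1..m+a}) {m+1..m+a}"
proof -
  let ?P = "partial_sums_set \<beta>"
  have P': "partial_sums_set (\<beta> @ [a]) = insert m ?P" using psums_snoc[OF assms(1)] m_def by simp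
  have i1: "is_init_seg (S \<inter> (block (\<beta>@[a]) i - partial_sums_set (\<beta> @ [a])))
                      (block (\<beta>@[a]) i - partial_sums_set (\<beta> @ [a]))
     \<longleftrightarrow> is_init_seg (S \<inter> {1..<m} \<inter> (block \<beta> i - ?P)) (block \<beta> i - ?P)" if i: "i < length \<beta>" for i
  proof -
    have bs: "block \<beta> i \<subseteq> {1..m}" using block_sub m_def by simp
    have e1: "block (\<beta>@[a]) i - partial_sums_set (\<beta> @ [a]) = (block \<beta> i - ?P) - {m}"
      using block_snoc[OF i] P' by auto
    have e2: "S \<inter> ((block \<beta> i - ?P) - {m}) = S \<inter> {1..<m} \<inter> (block \<beta> i - ?P)"
      using bs by auto
    show ?thesis unfolding e1 e2
      by (rule init_drop_max[symmetric]) (use bs in auto)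
  qed
  have i2: "block (\<beta>@[a]) (length \<beta>) - partial_sums_set (\<beta> @ [a]) = {m+1..m+a}"
    using block_snoc_last P' psums_le m_def by fastforce
  have len: "length (\<beta>@[a]) = Suc (length \<beta>)" by simp
  have allS: "\<And>Q L. (\<forall>i<Suc L. Q i) = ((\<forall>i<L. Q i) \<and> Q L)" by (auto simp: less_Suc_eq)
  have sl: "sum_list (\<beta>@[a]) = m + a" using m_def by simp
  have r: "(\<forall>i<length \<beta>. is_init_seg (S \<inter> (block (\<beta>@[a]) i - partial_sums_set (\<beta> @ [a])))
                      (block (\<beta>@[a]) i - partial_sums_set (\<beta> @ [a])))
      = (\<forall>i<length \<beta>. is_init_seg (S \<inter> {1..<m} \<inter> (block \<beta> i - ?P)) (block \<beta> i - ?P))"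
    using i1 by blast
  show ?thesis
    unfolding alpha_unimodal_def len allS sl r i2 m_def[symmetric] by auto
qed



definition wt :: "'a::comm_ring_1 \<Rightarrow> nat list \<Rightarrow> 'a" where
  "wt q \<alpha> = (\<Sum>S\<in>unimodal_sets \<alpha>. q ^ card S)"

definition qint :: "'a::comm_ring_1 \<Rightarrow> nat \<Rightarrow> 'a" where
  "qint q a = (\<Sum>k<a. q ^ k)"

lemma unimodal_single:
  assumes "a \<ge> 1"
  shows "unimodal_sets [a] = (\<lambda>k. {1..<1+k}) ` {..<a}"
proof -
  have P: "partial_sums_set [a] = {}" by (simp add: partial_sums_set_def)
  have B: "block [a] 0 = {0+1..0+a}" by (simp add: block_def)
  have c: "alpha_unimodal [a] S \<longleftrightarrow> S \<subseteq> {1..<0+a} \<and> is_init_seg (S \<inter> {0+1..0+a}) {0+1..0+a}" for S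
    unfolding alpha_unimodal_def P by (simp add: block_def)
  show ?thesis
  proof (intro set_eqI iffI)
    fix S assume "S \<in> unimodal_sets [a]"
    hence S: "S \<subseteq> {1..<0+a}" "is_init_seg (S \<inter> {0+1..0+a}) {0+1..0+a}" using c unimodal_sets_def by auto
    then obtain k where k: "k < a" "S \<inter> {0+1..0+a} = {0+1..<0+1+k}" using seg_lemma[OF S(1) assms] by blast
    have "S = S \<inter> {0+1..0+a}" using S(1) by auto
    thus "S \<in> (\<lambda>k. {1..<1+k}) ` {..<a}" using k by auto
  next
    fix S assume "S \<in> (\<lambda>k. {1..<1+k}) ` {..<a}"
    then obtain k where k: "k < a" "S = {1..<1+k}" by auto
    have S1: "S \<subseteq> {1..<0+a}" using k by auto
    moreover have "S \<inter> {0+1..0+a} = {0+1..<0+1+k}" using k by auto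
    ultimately have "is_init_seg (S \<inter> {0+1..0+a}) {0+1..0+a}" using seg_lemma[OF S1 assms] k by blast
    thus "S \<in> unimodal_sets [a]" using c S1 unimodal_sets_def by auto
  qed
qed

lemma wt_single: "a \<ge> 1 \<Longrightarrow> wt q [a] = qint q a"
  unfolding wt_def qint_def unimodal_single
proof (subst sum.reindex)
  show "inj_on (\<lambda>k. {1..<1+k}) {..<a}"
  proof (rule inj_onI)
    fix x y assume "{1..<1+x} = {1..<(1::nat)+y}"
    hence "card {1..<1+x} = card {1..<(1::nat)+y}" by simp
    thus "x = y" by simp
  qed
qed simp_all

lemma unimodal_sub: "S \<in> unimodal_sets \<alpha> \<Longrightarrow> S \<subseteq> {1..<sum_list \<alpha>}"
  by (simp add: unimodal_sets_def alpha_unimodal_def)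

lemma wt_snoc:
  assumes "\<beta> \<noteq> []" "sum_list \<beta> \<ge> 1" "a \<ge> 1"
  shows "wt q (\<beta> @ [a]) = wt q \<beta> * (1 + q) * qint q a"
proof -
  define m where "m = sum_list \<beta>"
  define f where "f = (\<lambda>(S1::nat set, b::bool, k::nat). S1 \<union> (if b then {m} else {}) \<union> {m+1..<m+1+k})"
  define g where "g = (\<lambda>S::nat set. (S \<inter> {1..<m}, m \<in> S, card (S \<inter> {m<..})))"
  let ?D = "unimodal_sets \<beta> \<times> (UNIV::bool set) \<times> {..<a}"
  have char: "S \<in> unimodal_sets (\<beta>@[a]) \<longleftrightarrow> S \<subseteq> {1..<m+a} \<and> S \<inter> {1..<m} \<in> unimodal_sets \<beta> \<and>
     is_init_seg (S \<inter> {m+1..m+a}) {m+1..m+a}" for S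
    using unimodal_snoc[OF assms(1), of a S] m_def unimodal_sets_def by simp
  have fE: "f (S1, b, k) = S1 \<union> (if b then {m} else {}) \<union> {m+1..<m+1+k}" for S1 b k
    unfolding f_def by simp
  have img: "unimodal_sets (\<beta>@[a]) = f ` ?D"
  proof (intro set_eqI iffI)
    fix S assume "S \<in> unimodal_sets (\<beta>@[a])"
    hence S: "S \<subseteq> {1..<m+a}" "S \<inter> {1..<m} \<in> unimodal_sets \<beta>" "is_init_seg (S \<inter> {m+1..m+a}) {m+1..m+a}"
      using char by auto
    then obtain k where k: "k < a" "S \<inter> {m+1..m+a} = {m+1..<m+1+k}" using seg_lemma[OF S(1) assms(3)] by blast
    have "S = (S \<inter> {1..<m}) \<union> (if m \<in> S then {m} else {}) \<union> (S \<inter> {m+1..m+a})"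
    proof (rule set_eqI)
      fix x show "x \<in> S \<longleftrightarrow> x \<in> (S \<inter> {1..<m}) \<union> (if m \<in> S then {m} else {}) \<union> (S \<inter> {m+1..m+a})"
        using subsetD[OF S(1), of x] by (cases "x < m"; cases "x = m") auto
    qed
    hence "S = f (S \<inter> {1..<m}, m \<in> S, k)" using k unfolding fE by simp
    thus "S \<in> f ` ?D" using S(2) k by blast
  next
    fix S assume "S \<in> f ` ?D"
    then obtain S1 b k where x: "S1 \<in> unimodal_sets \<beta>" "k < a" "S = f (S1, b, k)" by auto
    have S1s: "S1 \<subseteq> {1..<m}" using unimodal_sub[OF x(1)] m_def by simp
    have Sd: "S = S1 \<union> (if b then {m} else {}) \<union> {m+1..<m+1+k}" using x(3) fE by simp
    have sub: "S \<subseteq> {1..<m+a}" using Sd S1s x(2) assms(2) m_def by auto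
    moreover have "S \<inter> {1..<m} = S1" using Sd S1s by auto
    moreover have "S \<inter> {m+1..m+a} = {m+1..<m+1+k}" using Sd S1s x(2) by auto
    ultimately show "S \<in> unimodal_sets (\<beta>@[a])"
      using char x seg_lemma[OF sub assms(3)] by auto
  qed
  have fin1: "finite S1" if "S1 \<in> unimodal_sets \<beta>" for S1
    using unimodal_sub[OF that] finite_subset by blast
  have gf0: "g (f (S1, b, k)) = (S1, b, k)" if S1u: "S1 \<in> unimodal_sets \<beta>" for S1 b k
  proof -
    have S1s: "S1 \<subseteq> {1..<m}" using unimodal_sub[OF S1u] m_def by simp
    have "f (S1, b, k) \<inter> {m<..} = {m+1..<m+1+k}" unfolding fE using S1s by auto
    moreover have "f (S1, b, k) \<inter> {1..<m} = S1" unfolding fE using S1s by auto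
    moreover have "(m \<in> f (S1, b, k)) = b" unfolding fE using S1s by auto
    ultimately show ?thesis unfolding g_def by simp
  qed
  have gf: "g (f x) = x" if "x \<in> ?D" for x
    using that gf0 by (cases x) auto
  have inj: "inj_on f ?D" by (rule inj_on_inverseI[of _ g]) (rule gf)
  have cardf: "card (f (S1, b, k)) = card S1 + (if b then 1 else 0) + k" if "S1 \<in> unimodal_sets \<beta>" for S1 b k
  proof -
    have S1s: "S1 \<subseteq> {1..<m}" using unimodal_sub[OF that] m_def by simp
    have "card (f (S1, b, k)) = card (S1 \<union> (if b then {m} else {})) + card {m+1..<m+1+k}"
      unfolding fE using fin1[OF that] S1s by (intro card_Un_disjoint) auto
    also have "card (S1 \<union> (if b then {m} else {})) = card S1 + card (if b then {m} else ({}::nat set))"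
      using fin1[OF that] S1s by (intro card_Un_disjoint) auto
    finally show ?thesis by simp
  qed
  have "wt q (\<beta>@[a]) = (\<Sum>x\<in>?D. q ^ card (f x))"
    unfolding wt_def img by (rule sum.reindex[OF inj, unfolded comp_def])
  also have "\<dots> = (\<Sum>S1\<in>unimodal_sets \<beta>. \<Sum>bk\<in>(UNIV::bool set) \<times> {..<a}. q ^ card (f (S1, bk)))"
    by (subst sum.cartesian_product) (simp add: case_prod_unfold)
  also have "\<dots> = (\<Sum>S1\<in>unimodal_sets \<beta>. q ^ card S1 * ((1 + q) * qint q a))"
  proof (rule sum.cong[OF refl])
    fix S1 assume S1: "S1 \<in> unimodal_sets \<beta>"
    have "(\<Sum>bk\<in>(UNIV::bool set) \<times> {..<a}. q ^ card (f (S1, bk)))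
        = (\<Sum>b\<in>(UNIV::bool set). \<Sum>k<a. q ^ card (f (S1, b, k)))"
      by (subst sum.cartesian_product) (simp add: case_prod_unfold)
    also have "\<dots> = (\<Sum>b\<in>(UNIV::bool set). \<Sum>k<a. q ^ card S1 * q ^ (if b then 1 else 0) * q ^ k)"
      by (simp add: cardf[OF S1] power_add)
    also have "\<dots> = q ^ card S1 * ((1 + q) * qint q a)"
      by (simp add: UNIV_bool qint_def sum_distrib_left sum_distrib_right algebra_simps sum.distrib)
    finally show "(\<Sum>bk\<in>(UNIV::bool set) \<times> {..<a}. q ^ card (f (S1, bk))) = q ^ card S1 * ((1 + q) * qint q a)" .
  qed
  also have "\<dots> = wt q \<beta> * (1 + q) * qint q a"
    by (simp add: wt_def sum_distrib_right mult.assoc)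
  finally show ?thesis .
qed




lemma len_le_sum: "(\<forall>a\<in>set \<alpha>. 0 < (a::nat)) \<Longrightarrow> length \<alpha> \<le> sum_list \<alpha>"
  by (induction \<alpha>) auto

lemma finite_comp: "finite (compositions n)"
proof (rule finite_subset)
  show "compositions n \<subseteq> {xs. set xs \<subseteq> {0..n} \<and> length xs \<le> n}"
    unfolding compositions_def using len_le_sum member_le_sum_list by fastforce
  show "finite {xs. set xs \<subseteq> {0..n} \<and> length xs \<le> n}"
    by (rule finite_lists_length_le) simp
qed

lemma comp_decomp:
  assumes "n \<ge> 1"
  shows "compositions n = insert [n] ((\<lambda>(a,\<beta>). \<beta>@[a]) ` Sigma {1..<n} (\<lambda>a. compositions (n-a)))"
proof (intro set_eqI iffI)
  fix \<alpha> assume "\<alpha> \<in> compositions n"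
  hence pos: "\<forall>a\<in>set \<alpha>. 0 < a" and s: "sum_list \<alpha> = n" by (auto simp: compositions_def)
  have "\<alpha> \<noteq> []" using s assms by auto
  then obtain \<beta> a where ab: "\<alpha> = \<beta> @ [a]" by (metis rev_exhaust)
  show "\<alpha> \<in> insert [n] ((\<lambda>(a,\<beta>). \<beta>@[a]) ` Sigma {1..<n} (\<lambda>a. compositions (n-a)))"
  proof (cases "\<beta> = []")
    case True thus ?thesis using ab s by simp
  next
    case False
    then obtain b where b: "b \<in> set \<beta>" by (meson list.set_sel(1))
    have "b > 0" using b pos ab by auto
    moreover have "b \<le> sum_list \<beta>" using b member_le_sum_list by blast
    ultimately have "sum_list \<beta> > 0" by simp
    moreover have a0: "a > 0" using pos ab by auto
    ultimately have "a \<in> {1..<n}" "\<beta> \<in> compositions (n-a)"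
      using s ab pos by (auto simp: compositions_def)
    thus ?thesis using ab by force
  qed
next
  fix \<alpha> assume "\<alpha> \<in> insert [n] ((\<lambda>(a,\<beta>). \<beta>@[a]) ` Sigma {1..<n} (\<lambda>a. compositions (n-a)))"
  thus "\<alpha> \<in> compositions n" using assms by (auto simp: compositions_def)
qed

definition fc :: "'a::comm_ring_1 \<Rightarrow> 'a \<Rightarrow> nat \<Rightarrow> 'a" where
  "fc q t n = (\<Sum>\<alpha>\<in>compositions n. t ^ length \<alpha> * wt q \<alpha>)"

lemma fc_rec:
  assumes "n \<ge> 1"
  shows "fc q t n = t * qint q n + (1 + q) * t * (\<Sum>a\<in>{1..<n}. qint q a * fc q t (n - a))"
proof -
  let ?h = "(\<lambda>(a,\<beta>). \<beta>@[a])"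
  let ?D = "Sigma {1..<n} (\<lambda>a. compositions (n-a))"
  have inj: "inj_on ?h ?D" by (auto simp: inj_on_def)
  have notin: "[n] \<notin> ?h ` ?D" by auto
  have fin: "finite (?h ` ?D)" using finite_comp by auto
  have "fc q t n = t * wt q [n] + (\<Sum>\<alpha>\<in>?h ` ?D. t ^ length \<alpha> * wt q \<alpha>)"
    unfolding fc_def comp_decomp[OF assms] by (subst sum.insert[OF fin notin]) simp
  also have "wt q [n] = qint q n" using wt_single assms by simp
  also have "(\<Sum>\<alpha>\<in>?h ` ?D. t ^ length \<alpha> * wt q \<alpha>) = (\<Sum>p\<in>?D. t ^ length (?h p) * wt q (?h p))"
    by (subst sum.reindex[OF inj]) simp
  also have "\<dots> = (\<Sum>a\<in>{1..<n}. \<Sum>\<beta>\<in>compositions (n-a). t ^ length (\<beta>@[a]) * wt q (\<beta>@[a]))"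
    by (subst sum.Sigma) (auto simp: finite_comp case_prod_unfold)
  also have "\<dots> = (\<Sum>a\<in>{1..<n}. \<Sum>\<beta>\<in>compositions (n-a). (1 + q) * t * (qint q a * (t ^ length \<beta> * wt q \<beta>)))"
  proof (intro sum.cong refl)
    fix a \<beta> assume a: "a \<in> {1..<n}" and b: "\<beta> \<in> compositions (n-a)"
    have s: "sum_list \<beta> = n - a" using b by (simp add: compositions_def)
    hence "\<beta> \<noteq> []" "sum_list \<beta> \<ge> 1" using a by auto
    hence "wt q (\<beta>@[a]) = wt q \<beta> * (1 + q) * qint q a" using wt_snoc a by auto
    thus "t ^ length (\<beta>@[a]) * wt q (\<beta>@[a]) = (1 + q) * t * (qint q a * (t ^ length \<beta> * wt q \<beta>))"
      by (simp add: algebra_simps)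
  qed
  also have "\<dots> = (1 + q) * t * (\<Sum>a\<in>{1..<n}. qint q a * fc q t (n - a))"
    by (simp add: fc_def sum_distrib_left)
  finally show ?thesis .
qed

lemma F_nth: "F_series q t $ n = (if n = 0 then 0 else fc q t n)"
  unfolding F_series_def fc_def wt_def
  by (simp add: sum_distrib_left mult.commute)




lemma qint_Suc: "qint q (Suc m) = 1 + q * qint q m"
  unfolding qint_def sum.lessThan_Suc_shift by (simp add: sum_distrib_left)

lemma qint_0[simp]: "qint q 0 = 0" by (simp add: qint_def)

lemma F_eq:
  "F_series q t = fps_const t * Abs_fps (qint q) + fps_const ((1+q)*t) * (Abs_fps (qint q) * F_series q t)"
proof (rule fps_ext)
  fix n
  show "F_series q t $ n = (fps_const t * Abs_fps (qint q) + fps_const ((1+q)*t) * (Abs_fps (qint q) * F_series q t)) $ n"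
  proof (cases "n = 0")
    case True thus ?thesis by (simp add: F_nth qint_def)
  next
    case False
    have "(Abs_fps (qint q) * F_series q t) $ n = (\<Sum>i=0..n. qint q i * F_series q t $ (n - i))"
      by (simp add: fps_mult_nth)
    also have "\<dots> = (\<Sum>i\<in>{1..<n}. qint q i * F_series q t $ (n - i))"
    proof (rule sum.mono_neutral_right)
      show "\<forall>i\<in>{0..n} - {1..<n}. qint q i * F_series q t $ (n - i) = 0"
      proof
        fix i assume "i \<in> {0..n} - {1..<n}"
        hence "i = 0 \<or> i = n" by auto
        thus "qint q i * F_series q t $ (n - i) = 0" by (auto simp: F_nth)
      qed
    qed auto
    also have "\<dots> = (\<Sum>i\<in>{1..<n}. qint q i * fc q t (n - i))"
      by (intro sum.cong refl) (auto simp: F_nth)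
    finally have GF: "(Abs_fps (qint q) * F_series q t) $ n = (\<Sum>i\<in>{1..<n}. qint q i * fc q t (n - i))" .
    have "(fps_const t * Abs_fps (qint q) + fps_const ((1+q)*t) * (Abs_fps (qint q) * F_series q t)) $ n
        = t * qint q n + (1+q)*t * (Abs_fps (qint q) * F_series q t) $ n"
      by (simp only: fps_add_nth fps_mult_left_const_nth fps_nth_Abs_fps)
    also have "\<dots> = fc q t n" unfolding GF using fc_rec[of n q t] False by simp
    finally show ?thesis using False by (simp add: F_nth)
  qed
qed

lemma G_eq: "Abs_fps (qint q) * (1 - fps_const q * fps_X) = Abs_fps (\<lambda>n. if n = 0 then 0 else 1)"
proof (rule fps_ext)
  fix n
  have e: "Abs_fps (qint q) * (1 - fps_const q * fps_X) = Abs_fps (qint q) - fps_const q * (fps_X * Abs_fps (qint q))"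
    by (simp add: algebra_simps)
  show "(Abs_fps (qint q) * (1 - fps_const q * fps_X)) $ n = Abs_fps (\<lambda>n. if n = 0 then 0 else 1) $ n"
    unfolding e by (cases n) (auto simp: qint_Suc)
qed

lemma H_eq: "Abs_fps (\<lambda>n. if n = 0 then 0 else (1::'a::comm_ring_1)) * (1 - fps_X) = fps_X"
proof (rule fps_ext)
  fix n
  have e: "Abs_fps (\<lambda>n. if n = 0 then 0 else (1::'a)) * (1 - fps_X) = Abs_fps (\<lambda>n. if n = 0 then 0 else (1::'a)) - fps_X * Abs_fps (\<lambda>n. if n = 0 then 0 else (1::'a))"
    by (simp add: algebra_simps)
  show "(Abs_fps (\<lambda>n. if n = 0 then 0 else (1::'a)) * (1 - fps_X)) $ n = fps_X $ n"
    unfolding e by (auto simp: fps_X_nth)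
qed

lemma constmul: "fps_const ((1+q)*(1+t)) = (1 + fps_const q) * (1 + fps_const (t::'a::comm_ring_1))"
  by (simp add: fps_eq_iff algebra_simps)

lemma constmul2: "fps_const ((1+q)*t) = (1 + fps_const q) * fps_const (t::'a::comm_ring_1)"
  by (simp add: fps_eq_iff algebra_simps)

theorem proposition2p1:
  fixes q t :: "'a::field"
  shows "F_series q t =
    fps_const t * fps_X /
      (1 - fps_const ((1 + q) * (1 + t)) * fps_X + fps_const q * fps_X ^ 2)"
proof -
  define G where "G = Abs_fps (qint q)"
  define F where "F = F_series q t"
  define cq where "cq = fps_const q"
  define ct where "ct = fps_const t"
  define X where "X = (fps_X :: 'a fps)"
  define D where "D = 1 - fps_const ((1 + q) * (1 + t)) * fps_X + fps_const q * fps_X ^ 2"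
  have GE: "G * ((1 - X) * (1 - cq * X)) = X"
    using G_eq[of q] H_eq unfolding G_def cq_def X_def by (metis mult.assoc mult.commute)
  have FE: "F = ct * G + (1 + cq) * ct * (G * F)"
    using F_eq[of q t] unfolding F_def G_def ct_def cq_def constmul2 .
  have Dd: "D = 1 - (1 + cq) * (1 + ct) * X + cq * X^2"
    unfolding D_def constmul cq_def ct_def X_def ..
  have "F * D = F * ((1 - X) * (1 - cq * X)) - (1 + cq) * ct * X * F"
    unfolding Dd by (simp add: algebra_simps power2_eq_square)
  also have "F * ((1 - X) * (1 - cq * X)) = ct * (G * ((1 - X) * (1 - cq * X))) + (1 + cq) * ct * (G * ((1 - X) * (1 - cq * X))) * F"
    by (subst FE) (simp add: algebra_simps)
  finally have FD: "F * D = ct * X"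
    unfolding GE by (simp add: algebra_simps)
  have "D $ 0 = 1" unfolding D_def by simp
  hence D0: "D \<noteq> 0" by auto
  have "F = F * D / D" using D0 by simp
  also have "\<dots> = ct * X / D" using FD by simp
  finally show ?thesis unfolding F_def ct_def X_def D_def .
qed

end
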